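(* There is a constant $N>0$ such that for every discriminant $D\in\mathcal{O}_d$ with $|D|>N$ the following holds. Let $\epsilon_D$ be a fundamental solution of $t^2-u^2D=4$, write $\epsilon_D^{\,n+1}=\frac12(t_n+u_n\sqrt{D})$ with $t_n,u_n\in\mathcal{O}_d$ for $n\ge0$, and let $m(\epsilon_D)=\min\{n\ge0 : |t_n|<\frac49|u_n|^2\}$ (which exists and lies in $\{0,1,2\}$). If $m(\epsilon_D)\neq 0$, then $|u_{m(\epsilon_D)}|\le 30|D|^{3/2}$.
   Context: $d\in\{1,2,3,7,11,19,43,67,163\}$ (so $k_d=\mathbb{Q}(\sqrt{-d})$ has class number one), $\mathcal{O}_d$ is the ring of integers of $k_d$. An element $D\in\mathcal{O}_d$ is a discriminant if $D$ is not a perfect square in $\mathcal{O}_d$ and $D\equiv x^2\pmod{4\mathcal{O}_d}$ for some $x\in\mathcal{O}_d$. The square root $\sqrt{D}$ is chosen with argument in $[0,\pi)$. For a solution $(t,u)\in\mathcal{O}_d^2$ of $t^2-u^2D=4$ set $\epsilon_{t,u}=\frac12(t+u\sqrt{D})$. A solution $(t_0,u_0)$ is fundamental if $|\epsilon_{t_0,u_0}|$ is the smallest value larger than $1$ among all $|\epsilon_{t,u}|$; then $\epsilon_D=\epsilon_{t_0,u_0}$. *)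

theory Defs
  imports "HOL-Analysis.Analysis"
begin

text \<open>Imaginary quadratic fields of class number one.\<close>
definition class_one_d :: "nat set" where
  "class_one_d = {1, 2, 3, 7, 11, 19, 43, 67, 163}"

definition omega_d :: "nat \<Rightarrow> complex" where
  "omega_d d = (if d mod 4 = 3 then (1 + \<i> * complex_of_real (sqrt (real d))) / 2
                else \<i> * complex_of_real (sqrt (real d)))"

definition O_d :: "nat \<Rightarrow> complex set" where
  "O_d d = {of_int a + of_int b * omega_d d | a b. True}"

definition is_discriminant :: "nat \<Rightarrow> complex \<Rightarrow> bool" where
  "is_discriminant d D \<longleftrightarrow> D \<in> O_d d \<and> \<not> (\<exists>x\<in>O_d d. x ^ 2 = D)
     \<and> (\<exists>x\<in>O_d d. \<exists>y\<in>O_d d. D - x ^ 2 = 4 * y)"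

definition sqrtD :: "complex \<Rightarrow> complex" where
  "sqrtD D = (THE s. s ^ 2 = D \<and> 0 \<le> Arg s \<and> Arg s < pi)"

definition eps_tu :: "complex \<Rightarrow> complex \<Rightarrow> complex \<Rightarrow> complex" where
  "eps_tu D t u = (t + u * sqrtD D) / 2"

definition pell_sol :: "nat \<Rightarrow> complex \<Rightarrow> complex \<Rightarrow> complex \<Rightarrow> bool" where
  "pell_sol d D t u \<longleftrightarrow> t \<in> O_d d \<and> u \<in> O_d d \<and> t ^ 2 - u ^ 2 * D = 4"

definition fundamental_sol :: "nat \<Rightarrow> complex \<Rightarrow> complex \<Rightarrow> complex \<Rightarrow> bool" where
  "fundamental_sol d D t0 u0 \<longleftrightarrow> pell_sol d D t0 u0 \<and> cmod (eps_tu D t0 u0) > 1 \<and>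
     (\<forall>t u. pell_sol d D t u \<and> cmod (eps_tu D t u) > 1 \<longrightarrow>
        cmod (eps_tu D t0 u0) \<le> cmod (eps_tu D t u))"

end

theory Submission
  imports Defs
begin


lemma sqrtD_sq:
  assumes "D \<noteq> 0"
  shows "sqrtD D ^ 2 = D"
proof -
  let ?P = "\<lambda>s. s ^ 2 = D \<and> 0 \<le> Arg s \<and> Arg s < pi"
  have ex: "\<exists>s. ?P s"
  proof -
    define c where "c = csqrt D"
    have c2: "c ^ 2 = D" unfolding c_def by simp
    hence cnz: "c \<noteq> 0" using assms by auto
    have m2: "(-c) ^ 2 = D" using c2 by simp
    show ?thesis
    proof (cases "0 \<le> Arg c \<and> Arg c < pi")
      case True thus ?thesis using c2 by blast
    next
      case False
      hence "Arg c < 0 \<or> Arg c = pi" using Arg_le_pi[of c] by linarith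
      hence "0 \<le> Arg (-c) \<and> Arg (-c) < pi"
        using Arg_minus[OF cnz] mpi_less_Arg[of c] pi_gt_zero by (smt (verit))
      thus ?thesis using m2 by blast
    qed
  qed
  then obtain s where s: "?P s" by blast
  have "?P (sqrtD D)" unfolding sqrtD_def
  proof (rule theI[of ?P s])
    show "?P s" by fact
    fix y assume y: "?P y"
    hence "y = s \<or> y = -s" using s power2_eq_iff[of y s] by auto
    moreover have "s \<noteq> 0" using s assms by auto
    moreover have "y \<noteq> -s" 
    proof
      assume "y = -s"
      hence "Arg (-s) = (if Arg s \<le> 0 then Arg s + pi else Arg s - pi)"
        using Arg_minus \<open>s \<noteq> 0\<close> by blast
      thus False using s y \<open>y = -s\<close> by (auto split: if_splits)
    qed
    ultimately show "y = s" by blast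
  qed
  thus ?thesis by blast
qed



definition rr :: "nat \<Rightarrow> complex" where "rr d = \<i> * complex_of_real (sqrt (real d))"

definition hcond :: "nat \<Rightarrow> int \<Rightarrow> int \<Rightarrow> bool" where
  "hcond d A B = (if d mod 4 = 3 then even (A - B) else even A \<and> even B)"

lemma class_cases: "d \<in> class_one_d \<Longrightarrow> d mod 4 = 3 \<or> d = 1 \<or> d = 2"
  unfolding class_one_d_def by auto

lemma class_pos: "d \<in> class_one_d \<Longrightarrow> d > 0"
  unfolding class_one_d_def by auto

lemma rr_sq: "rr d ^ 2 = - of_nat d"
proof -
  have "(complex_of_real (sqrt (real d)))^2 = of_real (real d)"
    by (metis of_real_power real_sqrt_pow2 of_nat_0_le_iff)
  thus ?thesis unfolding rr_def by (simp add: power_mult_distrib)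
qed

lemma omega_eq: "omega_d d = (if d mod 4 = 3 then (1 + rr d)/2 else rr d)"
  unfolding omega_d_def rr_def by simp

lemma Od_half:
  assumes "d \<in> class_one_d"
  shows "z \<in> O_d d \<longleftrightarrow> (\<exists>A B::int. z = (of_int A + of_int B * rr d)/2 \<and> hcond d A B)"
proof
  assume "z \<in> O_d d"
  then obtain a b where z: "z = of_int a + of_int b * omega_d d" unfolding O_d_def by auto
  show "\<exists>A B::int. z = (of_int A + of_int B * rr d)/2 \<and> hcond d A B"
  proof (cases "d mod 4 = 3")
    case True
    have "z = (of_int (2*a+b) + of_int b * rr d)/2" using True z
      by (simp add: omega_eq field_simps)
    moreover have "hcond d (2*a+b) b" using True by (simp add: hcond_def)
    ultimately show ?thesis by blast
  next
    case False
    have "z = (of_int (2*a) + of_int (2*b) * rr d)/2" using False z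
      by (simp add: omega_eq field_simps)
    moreover have "hcond d (2*a) (2*b)" using False by (simp add: hcond_def)
    ultimately show ?thesis by blast
  qed
next
  assume "\<exists>A B::int. z = (of_int A + of_int B * rr d)/2 \<and> hcond d A B"
  then obtain A B where z: "z = (of_int A + of_int B * rr d)/2" and h: "hcond d A B" by blast
  show "z \<in> O_d d"
  proof (cases "d mod 4 = 3")
    case True
    have "even (A - B)" using h True by (simp add: hcond_def)
    then obtain k where k: "A - B = 2*k" by (elim evenE)
    have "z = of_int k + of_int B * omega_d d" using True z k
      by (simp add: omega_eq field_simps)
    thus ?thesis unfolding O_d_def by blast
  next
    case False
    then obtain k l where k: "A = 2*k" "B = 2*l" using h by (auto simp: hcond_def elim!: evenE)
    have "z = of_int k + of_int l * omega_d d" using False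
      by (simp add: omega_eq z k add_divide_distrib)
    thus ?thesis unfolding O_d_def by blast
  qed
qed

lemma omega_sq: "\<exists>c0 c1::int. omega_d d ^ 2 = of_int c0 + of_int c1 * omega_d d"
proof (cases "d mod 4 = 3")
  case True
  have "(1 + rr d)^2 = 1 + 2 * rr d + rr d ^ 2" by (simp add: power2_eq_square algebra_simps)
  also have "\<dots> = 1 + 2 * rr d - of_nat d" by (simp add: rr_sq)
  finally have e: "(1 + rr d)^2 = 1 + 2 * rr d - of_nat d" .
  have d4: "int d = 4 * (int d div 4) + 3" using True by presburger
  have "omega_d d ^ 2 = of_int (- (int d div 4) - 1) + of_int 1 * omega_d d"
  proof -
    have "omega_d d ^ 2 = (1 + rr d)^2 / 4" using True by (simp add: omega_eq power_divide)
    also have "\<dots> = (1 + 2 * rr d - of_int (int d)) / 4" using e by simp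
    also have "\<dots> = (1 + 2 * rr d - of_int (4 * (int d div 4) + 3)) / 4" using d4 by metis
    also have "\<dots> = of_int (- (int d div 4) - 1) + of_int 1 * omega_d d"
      using True by (simp add: omega_eq field_simps)
    finally show ?thesis .
  qed
  thus ?thesis by blast
next
  case False
  have "omega_d d ^ 2 = of_int (- int d) + of_int 0 * omega_d d"
    using False by (simp add: omega_eq rr_sq)
  thus ?thesis by blast
qed

lemma Od_add: "x \<in> O_d d \<Longrightarrow> y \<in> O_d d \<Longrightarrow> x + y \<in> O_d d"
proof -
  assume "x \<in> O_d d" "y \<in> O_d d"
  then obtain a b a' b' where "x = of_int a + of_int b * omega_d d" "y = of_int a' + of_int b' * omega_d d"
    unfolding O_d_def by auto
  hence "x + y = of_int (a+a') + of_int (b+b') * omega_d d" by (simp add: algebra_simps)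
  thus ?thesis unfolding O_d_def by blast
qed

lemma Od_diff: "x \<in> O_d d \<Longrightarrow> y \<in> O_d d \<Longrightarrow> x - y \<in> O_d d"
proof -
  assume "x \<in> O_d d" "y \<in> O_d d"
  then obtain a b a' b' where "x = of_int a + of_int b * omega_d d" "y = of_int a' + of_int b' * omega_d d"
    unfolding O_d_def by auto
  hence "x - y = of_int (a-a') + of_int (b-b') * omega_d d" by (simp add: algebra_simps)
  thus ?thesis unfolding O_d_def by blast
qed

lemma Od_mult: "x \<in> O_d d \<Longrightarrow> y \<in> O_d d \<Longrightarrow> x * y \<in> O_d d"
proof -
  assume "x \<in> O_d d" "y \<in> O_d d"
  then obtain a b a' b' where xy: "x = of_int a + of_int b * omega_d d" "y = of_int a' + of_int b' * omega_d d"
    unfolding O_d_def by auto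
  obtain c0 c1 where c: "omega_d d ^ 2 = of_int c0 + of_int c1 * omega_d d" using omega_sq by blast
  have "x * y = of_int (a*a') + of_int (a*b'+a'*b) * omega_d d + of_int (b*b') * omega_d d ^ 2"
    using xy by (simp add: algebra_simps power2_eq_square)
  also have "\<dots> = of_int (a*a' + b*b'*c0) + of_int (a*b'+a'*b + b*b'*c1) * omega_d d"
    unfolding c by (simp add: algebra_simps)
  finally show ?thesis unfolding O_d_def by blast
qed

lemma Od_of_int: "of_int k \<in> O_d d"
  unfolding O_d_def by (rule CollectI, rule exI[of _ k], rule exI[of _ 0]) simp

lemma Od_numeral: "numeral k \<in> O_d d"
  using Od_of_int[of "numeral k" d] by simp

lemma Od_power: "x \<in> O_d d \<Longrightarrow> x ^ n \<in> O_d d"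
  by (induction n) (auto intro: Od_mult simp: Od_of_int[of 1, simplified])



lemma l13: "(k::nat) < 13 \<Longrightarrow> k = 0 \<or> k = 1 \<or> k = 2 \<or> k = 3 \<or> k = 4 \<or> k = 5 \<or> k = 6 \<or> k = 7 \<or> k = 8 \<or> k = 9 \<or> k = 10 \<or> k = 11 \<or> k = 12"
  by presburger

lemma sqfree_check: "d \<in> {1,2,3,7,11,19,43,67,163::nat} \<Longrightarrow> (k::nat) < 13 \<Longrightarrow> k^2 dvd d \<Longrightarrow> k = 1"
  apply (drule l13)
  apply (elim disjE insertE)
  apply (simp_all add: dvd_eq_mod_eq_0)
  done

lemma sqfree_int:
  assumes "d \<in> class_one_d" "(b::int)^2 dvd int d"
  shows "b^2 = 1"
proof -
  let ?k = "nat \<bar>b\<bar>"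
  have dp: "d > 0" using assms class_pos by auto
  have "int (?k^2) dvd int d" using assms(2) by simp
  hence kd: "?k^2 dvd d" using int_dvd_int_iff by blast
  hence "?k^2 \<le> d" using dp by (intro dvd_imp_le) auto
  moreover have "d \<le> 163" using assms unfolding class_one_d_def by auto
  ultimately have "?k^2 \<le> 163" by linarith
  hence "?k^2 < 13^2" by simp
  hence "?k < 13" using power_less_imp_less_base by blast
  hence "?k = 1" using kd sqfree_check[of d] assms(1) unfolding class_one_d_def by blast
  hence "\<bar>b\<bar> = 1" by simp
  hence "\<bar>b\<bar>^2 = 1" by simp
  thus ?thesis by simp
qed

lemma sq_dvd_cancel:
  fixes n p c :: int
  assumes "n > 0" "n^2 dvd c * p^2" "\<And>b::int. b^2 dvd c \<Longrightarrow> b^2 = 1"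
  shows "n dvd p"
proof -
  define g where "g = gcd n p"
  have g0: "g \<noteq> 0" using assms(1) by (auto simp: g_def)
  obtain n' p' where np: "n = n' * g" "p = p' * g" and cop: "coprime n' p'"
    using gcd_coprime_exists[of n p] g0 unfolding g_def by blast
  have e1: "n^2 = n'^2 * g^2" using np by (metis power_mult_distrib)
  have e2: "c * p^2 = (c * p'^2) * g^2" using np by (metis power_mult_distrib mult.assoc)
  have "n'^2 * g^2 dvd (c * p'^2) * g^2"
    using assms(2) unfolding e1 e2 .
  hence "n'^2 dvd c * p'^2" using g0 by simp
  moreover have "coprime (n'^2) (p'^2)" using cop by simp
  ultimately have "n'^2 dvd c" using coprime_dvd_mult_left_iff by blast
  hence "n'^2 = 1" using assms(3) by blast
  hence "n' = 1 \<or> n' = -1" by (simp add: power2_eq_1_iff)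
  hence "n = g \<or> n = - g" using np(1) by auto
  moreover have "g dvd p" by (simp add: g_def)
  ultimately show ?thesis by (metis minus_dvd_iff)
qed

lemma even_sq_int: "even ((x::int)^2) \<longleftrightarrow> even x" by simp

lemma int_core:
  fixes p q n A B :: int
  assumes d: "d \<in> class_one_d" and n: "n > 0"
    and e1: "p^2 - int d * q^2 = 2*A*n^2" and e2: "p*q = B*n^2" and h: "hcond d A B"
  shows "\<exists>X Y. p = n*X \<and> q = n*Y \<and> hcond d X Y"
proof -
  have "(p^2 + int d * q^2)^2 = (p^2 - int d * q^2)^2 + 4 * int d * (p*q)^2"
    by (simp add: power2_eq_square algebra_simps)
  also have "\<dots> = (n^2)^2 * (4*A^2 + 4*int d*B^2)" unfolding e1 e2
    by (simp add: power2_eq_square algebra_simps)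
  finally have nrm: "(p^2 + int d * q^2)^2 = (n^2)^2 * (4*A^2 + 4*int d*B^2)" .
  hence "(n^2)^2 dvd (p^2 + int d * q^2)^2" by simp
  hence "n^2 dvd p^2 + int d * q^2" by (subst (asm) pow_divides_pow_iff) auto
  then obtain M where M: "p^2 + int d * q^2 = n^2 * M" by (elim dvdE)
  have "2 * p^2 = n^2 * (2*A + M)" using M e1 by (simp add: algebra_simps)
  hence "n^2 dvd 2 * p^2" by simp
  moreover have "\<And>b::int. b^2 dvd 2 \<Longrightarrow> b^2 = 1"
    using sqfree_int[of 2] by (simp add: class_one_d_def)
  ultimately have "n dvd p" using sq_dvd_cancel n by blast
  then obtain X where X: "p = n * X" by (elim dvdE)
  have "int d * q^2 = n^2 * (M - X^2)" using M X by (simp add: power_mult_distrib algebra_simps)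
  hence "n^2 dvd int d * q^2" by simp
  hence "n dvd q" using sq_dvd_cancel n sqfree_int[OF d] by blast
  then obtain Y where Y: "q = n * Y" by (elim dvdE)
  have n2: "n^2 \<noteq> 0" using n by simp
  have f1: "X^2 - int d * Y^2 = 2*A"
  proof -
    have "n^2 * (X^2 - int d * Y^2) = n^2 * (2*A)" using e1 X Y by (simp add: power_mult_distrib algebra_simps)
    thus ?thesis using n2 by simp
  qed
  have f3: "X^2 + int d * Y^2 = M"
  proof -
    have "n^2 * (X^2 + int d * Y^2) = n^2 * M" using M X Y by (simp add: power_mult_distrib algebra_simps)
    thus ?thesis using n2 by simp
  qed
  have f4: "M^2 = 4*A^2 + 4*int d*B^2"
  proof -
    have "(n^2)^2 * M^2 = (n^2)^2 * (4*A^2 + 4*int d*B^2)" using nrm M by (simp add: power_mult_distrib)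
    thus ?thesis using n2 by simp
  qed
  have evM: "even M"
  proof -
    have "even (M^2)" using f4 by simp
    thus ?thesis by simp
  qed
  have "hcond d X Y"
  proof (cases "d mod 4 = 3")
    case True
    hence "odd (int d)" by presburger
    moreover have "even (X^2 + int d * Y^2)" using f3 evM by simp
    ultimately have "even (X - Y)" by auto
    thus ?thesis using True by (simp add: hcond_def)
  next
    case False
    hence d12: "d = 1 \<or> d = 2" using class_cases[OF d] by auto
    from False h obtain A' B' where AB: "A = 2*A'" "B = 2*B'" by (auto simp: hcond_def elim!: evenE)
    from evM obtain M1 where M1: "M = 2*M1" by (elim evenE)
    have "4 * M1^2 = 4 * (4*A'^2 + 4*int d*B'^2)" using f4 M1 AB by (simp add: power_mult_distrib algebra_simps)
    hence "M1^2 = 2 * (2*A'^2 + 2*int d*B'^2)" by simp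
    hence "even (M1^2)" by simp
    hence "even M1" by simp
    then obtain M2 where M2: "M1 = 2*M2" by (elim evenE)
    have "2 * X^2 = 4 * (A' + M2)" using f1 f3 AB M1 M2 by (simp add: algebra_simps)
    hence "X^2 = 2 * (A' + M2)" by simp
    hence "even (X^2)" by simp
    hence "even X" by simp
    then obtain X1 where X1: "X = 2 * X1" by (elim evenE)
    have dY: "int d * Y^2 = 4 * (M2 - X1^2)" using f3 M1 M2 X1 by (simp add: power_mult_distrib algebra_simps)
    have "even Y"
    proof (cases "d = 1")
      case True
      hence "Y^2 = 2 * (2 * (M2 - X1^2))" using dY by simp
      hence "even (Y^2)" by (metis dvd_triv_left)
      thus ?thesis by simp
    next
      case False
      hence "d = 2" using d12 by simp
      hence "2 * Y^2 = 2 * (2 * (M2 - X1^2))" using dY by simp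
      hence "Y^2 = 2 * (M2 - X1^2)" by simp
      hence "even (Y^2)" by (metis dvd_triv_left)
      thus ?thesis by simp
    qed
    thus ?thesis using False \<open>even X\<close> by (simp add: hcond_def)
  qed
  thus ?thesis using X Y by blast
qed



lemma coord_eq:
  assumes "d > 0" "of_int a + of_int b * rr d = of_int a' + of_int b' * rr d"
  shows "a = a' \<and> b = b'"
proof -
  have "Re (of_int a + of_int b * rr d) = Re (of_int a' + of_int b' * rr d)" using assms by simp
  hence "a = a'" by (simp add: rr_def)
  have "Im (of_int a + of_int b * rr d) = Im (of_int a' + of_int b' * rr d)" using assms by simp
  hence "of_int b * sqrt (real d) = of_int b' * sqrt (real d)" by (simp add: rr_def)
  moreover have "sqrt (real d) > 0" using assms by simp
  ultimately have "b = b'" by simp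
  thus ?thesis using \<open>a = a'\<close> by simp
qed

lemma sq_ge1: "(x::int) \<noteq> 0 \<Longrightarrow> 1 \<le> x^2"
proof -
  assume "x \<noteq> 0"
  hence "1 \<le> \<bar>x\<bar>" by linarith
  hence "1 \<le> \<bar>x\<bar>^2" using one_le_power[of "\<bar>x\<bar>" 2] by blast
  thus ?thesis by simp
qed

lemma sq_ge4: "even (x::int) \<Longrightarrow> x \<noteq> 0 \<Longrightarrow> 4 \<le> x^2"
proof -
  assume "even x" "x \<noteq> 0"
  then obtain k where k: "x = 2*k" by (elim evenE)
  hence "k \<noteq> 0" using \<open>x \<noteq> 0\<close> by simp
  hence "1 \<le> k^2" by (rule sq_ge1)
  thus ?thesis using k by (simp add: power_mult_distrib)
qed

lemma int4:
  assumes d: "d \<in> class_one_d" and h: "hcond d A B" and nz: "\<not> (A = 0 \<and> B = 0)"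
  shows "4 \<le> A^2 + int d * B^2"
proof (cases "d mod 4 = 3")
  case True
  hence d3: "int d \<ge> 3" by presburger
  have ev: "even (A - B)" using True h by (simp add: hcond_def)
  show ?thesis
  proof (cases "B = 0")
    case True
    hence "even A" "A \<noteq> 0" using ev nz by auto
    hence "4 \<le> A^2" by (rule sq_ge4)
    thus ?thesis using True by simp
  next
    case False
    hence b1: "1 \<le> B^2" by (rule sq_ge1)
    show ?thesis
    proof (cases "A = 0")
      case True
      hence "even B" using ev by simp
      hence "4 \<le> B^2" using False by (rule sq_ge4)
      moreover have "1 * B^2 \<le> int d * B^2" using d3 by (intro mult_right_mono) auto
      moreover have "0 \<le> A^2" by simp
      ultimately show ?thesis by linarith
    next
      case False
      hence "1 \<le> A^2" by (rule sq_ge1)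
      moreover have "3 * 1 \<le> int d * B^2" using d3 b1 by (intro mult_mono) auto
      ultimately show ?thesis by simp
    qed
  qed
next
  case False
  hence ev: "even A" "even B" using h by (auto simp: hcond_def)
  have dp: "int d \<ge> 1" using class_pos[OF d] by simp
  show ?thesis
  proof (cases "A = 0")
    case True
    hence "B \<noteq> 0" using nz by simp
    hence "4 \<le> B^2" using ev by (intro sq_ge4)
    moreover have "1 * B^2 \<le> int d * B^2" using dp by (intro mult_right_mono) auto
    moreover have "0 \<le> A^2" by simp
    ultimately show ?thesis by linarith
  next
    case False
    hence "4 \<le> A^2" using ev by (intro sq_ge4)
    moreover have "0 \<le> int d * B^2" by simp
    ultimately show ?thesis by linarith
  qed
qed

lemma Od_norm:
  assumes d: "d \<in> class_one_d" and z: "z \<in> O_d d" and nz: "z \<noteq> 0"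
  shows "1 \<le> cmod z"
proof -
  obtain A B where zAB: "z = (of_int A + of_int B * rr d)/2" and h: "hcond d A B"
    using z Od_half[OF d] by blast
  have nAB: "\<not> (A = 0 \<and> B = 0)" using nz zAB by auto
  have ReIm: "Re z = A/2" "Im z = B * sqrt (real d) / 2" by (simp_all add: zAB rr_def)
  have "cmod z ^ 2 = (A^2 + real d * B^2) / 4"
    unfolding cmod_power2 ReIm by (simp add: power_divide power_mult_distrib)
  moreover have "4 \<le> real_of_int (A^2 + int d * B^2)" using int4[OF d h nAB] by linarith
  ultimately have "1 \<le> cmod z ^ 2" by simp
  show ?thesis
  proof (rule ccontr)
    assume "\<not> 1 \<le> cmod z"
    hence "cmod z ^ 2 < 1 ^ 2" by (intro power_strict_mono) auto
    thus False using \<open>1 \<le> cmod z ^ 2\<close> by simp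
  qed
qed

lemma Od_closed:
  assumes d: "d \<in> class_one_d" and DO: "D \<in> O_d d" and s2: "s^2 = D"
    and aO: "\<alpha> \<in> O_d d" and bO: "\<beta> \<in> O_d d" and bnz: "\<beta> \<noteq> 0" and ab: "\<alpha> = s * \<beta>"
  shows "s \<in> O_d d"
proof -
  let ?r = "rr d"
  have dp: "d > 0" using class_pos[OF d] .
  obtain A1 B1 where a: "\<alpha> = (of_int A1 + of_int B1 * ?r)/2" using aO Od_half[OF d] by blast
  obtain A2 B2 where b: "\<beta> = (of_int A2 + of_int B2 * ?r)/2" and hb: "hcond d A2 B2" using bO Od_half[OF d] by blast
  obtain A B where DD: "D = (of_int A + of_int B * ?r)/2" and hD: "hcond d A B" using DO Od_half[OF d] by blast
  define P where "P = A1*A2 + int d*B1*B2"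
  define Q where "Q = B1*A2 - A1*B2"
  define n where "n = A2^2 + int d*B2^2"
  have nAB: "\<not> (A2 = 0 \<and> B2 = 0)" using bnz b by auto
  have npos: "n > 0" using int4[OF d hb nAB] unfolding n_def by linarith
  have rsq: "?r * ?r = - of_int (int d)" using rr_sq[of d] by (simp add: power2_eq_square)
  have key: "(of_int P + of_int Q * ?r) * (of_int A2 + of_int B2 * ?r) = of_int n * (of_int A1 + of_int B1 * ?r)"
  proof -
    have "(of_int P + of_int Q * ?r) * (of_int A2 + of_int B2 * ?r)
      = of_int (P*A2) + of_int (P*B2 + Q*A2) * ?r + of_int (Q*B2) * (?r * ?r)"
      by (simp add: algebra_simps)
    also have "\<dots> = of_int (P*A2 - int d*Q*B2) + of_int (P*B2 + Q*A2) * ?r"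
      unfolding rsq by (simp add: algebra_simps)
    also have "P*A2 - int d*Q*B2 = n*A1" unfolding P_def Q_def n_def by (simp add: algebra_simps power2_eq_square)
    also have "P*B2 + Q*A2 = n*B1" unfolding P_def Q_def n_def by (simp add: algebra_simps power2_eq_square)
    finally show ?thesis by (simp add: algebra_simps)
  qed
  have bnz2: "of_int A2 + of_int B2 * ?r \<noteq> 0" using bnz b by auto
  have a2: "of_int A1 + of_int B1 * ?r = 2*\<alpha>" using a by (simp add: mult.commute)
  have b2: "of_int A2 + of_int B2 * ?r = 2*\<beta>" using b by (simp add: mult.commute)
  have sb: "s * (of_int A2 + of_int B2 * ?r) = of_int A1 + of_int B1 * ?r"
    unfolding a2 b2 ab by simp
  have "(of_int P + of_int Q * ?r) * (of_int A2 + of_int B2 * ?r) = of_int n * (s * (of_int A2 + of_int B2 * ?r))"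
    unfolding key sb ..
  hence "(of_int P + of_int Q * ?r) * (of_int A2 + of_int B2 * ?r) = (of_int n * s) * (of_int A2 + of_int B2 * ?r)"
    by (simp add: mult.assoc)
  hence sn: "of_int P + of_int Q * ?r = of_int n * s" using bnz2 by simp
  have "2 * (of_int P + of_int Q * ?r)^2 = 2 * (of_int n)^2 * s^2" unfolding sn by (simp add: power_mult_distrib)
  also have "\<dots> = of_int (n^2 * A) + of_int (n^2 * B) * ?r" unfolding s2 DD by (simp add: algebra_simps)
  finally have e: "2 * (of_int P + of_int Q * ?r)^2 = of_int (n^2 * A) + of_int (n^2 * B) * ?r" .
  have "2 * (of_int P + of_int Q * ?r)^2 = of_int (2*P^2) + of_int (4*P*Q) * ?r + of_int (2*Q^2) * (?r * ?r)"
    by (simp add: algebra_simps power2_eq_square)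
  also have "\<dots> = of_int (2*(P^2 - int d * Q^2)) + of_int (4*P*Q) * ?r"
    unfolding rsq by (simp add: algebra_simps)
  finally have "of_int (2*(P^2 - int d * Q^2)) + of_int (4*P*Q) * ?r = of_int (n^2 * A) + of_int (n^2 * B) * ?r"
    using e by simp
  hence c: "2*(P^2 - int d * Q^2) = n^2 * A" "4*P*Q = n^2 * B" using coord_eq[OF dp] by blast+
  have "(2*P)^2 - int d * (2*Q)^2 = 2*A*n^2" using c(1) by (simp add: power_mult_distrib algebra_simps)
  moreover have "(2*P)*(2*Q) = B*n^2" using c(2) by (simp add: algebra_simps)
  ultimately obtain X Y where XY: "2*P = n*X" "2*Q = n*Y" and hXY: "hcond d X Y"
    using int_core[OF d npos _ _ hD] by blast
  have "s = (of_int P + of_int Q * ?r) / of_int n" using sn npos by (simp add: field_simps)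
  also have "\<dots> = (of_int (2*P) + of_int (2*Q) * ?r) / (2 * of_int n)" using npos by (simp add: field_simps)
  also have "\<dots> = (of_int X + of_int Y * ?r) / 2" unfolding XY using npos by (simp add: field_simps)
  finally have "s = (of_int X + of_int Y * ?r) / 2" .
  thus ?thesis using Od_half[OF d] hXY by blast
qed

lemma uniq:
  assumes d: "d \<in> class_one_d" and disc: "is_discriminant d D" and s2: "s^2 = D"
    and O: "p \<in> O_d d" "q \<in> O_d d" "p' \<in> O_d d" "q' \<in> O_d d"
    and e: "p + q * s = p' + q' * s"
  shows "p = p' \<and> q = q'"
proof (cases "q = q'")
  case True thus ?thesis using e by simp
next
  case False
  have "p - p' = s * (q' - q)" using e by (simp add: algebra_simps)
  hence "s \<in> O_d d" using Od_closed[OF d _ s2 Od_diff[OF O(1) O(3)] Od_diff[OF O(4) O(2)]] disc False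
    unfolding is_discriminant_def by auto
  thus ?thesis using disc s2 unfolding is_discriminant_def by blast
qed



lemma powr32_sq: "(S::real) > 0 \<Longrightarrow> (S powr (3/2))^2 = S^3"
proof -
  assume S: "S > 0"
  have "(S powr (3/2))^2 = S powr (3/2) * S powr (3/2)" by (simp add: power2_eq_square)
  also have "\<dots> = S powr 3" using S by (simp add: powr_add[symmetric])
  also have "\<dots> = S^3" using S powr_realpow[of S 3] by simp
  finally show ?thesis .
qed

lemma le_30: 
  fixes S y :: real
  assumes "S > 0" "y \<ge> 0" "y^2 \<le> 900 * S^3"
  shows "y \<le> 30 * S powr (3/2)"
proof (rule power2_le_imp_le)
  show "y^2 \<le> (30 * S powr (3/2))^2" using assms powr32_sq[of S] by (simp add: power_mult_distrib)
  show "0 \<le> 30 * S powr (3/2)" by simp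
qed

lemma R1:
  fixes a T S :: real
  assumes a: "a \<ge> 1" and S: "S \<ge> 200" and h0: "T \<ge> 4/9 * a^2" and up: "T^2 \<le> 4 + a^2 * S"
  shows "T * a \<le> 30 * S powr (3/2)"
proof -
  define x where "x = a^2"
  have x1: "x \<ge> 1" using a unfolding x_def by (simp add: one_le_power)
  have "0 \<le> 4/9 * a^2" by simp
  hence T0: "T \<ge> 0" using h0 by linarith
  have "(4/9 * x)^2 \<le> T^2" using h0 x1 unfolding x_def by (intro power_mono) auto
  hence q: "16/81 * (x*x) \<le> 4 + x * S" using up unfolding x_def by (simp add: power2_eq_square algebra_simps)
  have x6: "x \<le> 6 * S"
  proof (rule ccontr)
    assume "\<not> x \<le> 6 * S"
    hence "(6 * S) * x < x * x" using x1 by (intro mult_strict_right_mono) auto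
    hence f1: "6 * (S * x) < x * x" by (simp add: algebra_simps)
    have "S * 1 \<le> S * x" using x1 S by (intro mult_left_mono) auto
    hence f2: "S \<le> x * S" by (simp add: algebra_simps)
    have f1': "6 * (x * S) < x * x" using f1 by (simp add: algebra_simps)
    show False using q f1' f2 S by linarith
  qed
  have "(T*a)^2 = T^2 * x" unfolding x_def by (simp add: power_mult_distrib)
  also have "\<dots> \<le> (4 + x*S) * x" using up x1 unfolding x_def by (intro mult_right_mono) (auto simp: algebra_simps)
  also have "\<dots> = 4*x + (x*x)*S" by (simp add: algebra_simps)
  also have "\<dots> \<le> 4*(6*S) + ((6*S)*(6*S))*S" using x6 x1 S
    by (intro add_mono mult_right_mono mult_mono) auto
  also have "\<dots> \<le> 900 * S^3"
  proof -
    have "1 * 1 \<le> S * S" using S by (intro mult_mono) auto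
    hence "S * 1 \<le> S * (S * S)" using S by (intro mult_left_mono) auto
    moreover have "((6*S)*(6*S))*S = 36 * (S * (S * S))" by (simp add: algebra_simps)
    moreover have "S^3 = S * (S * S)" by (simp add: power3_eq_cube)
    ultimately show ?thesis using S by simp
  qed
  finally show ?thesis using S T0 a by (intro le_30) auto
qed

lemma R2:
  fixes a T S :: real
  assumes a: "a \<ge> 1" and S: "S \<ge> 200" and T0: "T \<ge> 0" and low: "a^2 * S \<le> T^2 + 4"
    and h1: "4/9 * (T * a)^2 \<le> T^2 + 2"
  shows "a^2 \<le> 3 \<and> 14 \<le> T"
proof -
  have x1: "1 \<le> a^2" using a by (simp add: one_le_power)
  have "1 * S \<le> a^2 * S" using x1 S by (intro mult_right_mono) auto
  hence T196: "196 \<le> T^2" using low S by linarith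
  have "(14::real)^2 \<le> T^2" using T196 by simp
  hence "14 \<le> T" using T0 by (rule power2_le_imp_le)
  moreover have "a^2 \<le> 3"
  proof (rule ccontr)
    assume "\<not> a^2 \<le> 3"
    hence "T^2 * 3 \<le> T^2 * a^2" by (intro mult_left_mono) auto
    moreover have "(T*a)^2 = T^2 * a^2" by (simp add: power_mult_distrib)
    ultimately show False using h1 T196 by linarith
  qed
  ultimately show ?thesis by simp
qed

lemma R3:
  fixes T :: real
  assumes T: "T \<ge> 14"
  shows "T * (T^2 + 3) < 4/9 * (T^2 - 1)^2"
proof -
  define c2 where "c2 = T * T"
  define c3 where "c3 = T * c2"
  define c4 where "c4 = T * c3"
  have f2: "14 * T \<le> c2" unfolding c2_def using T by (intro mult_right_mono) auto
  have c2p: "c2 \<ge> 0" using f2 T by linarith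
  have f3: "14 * c2 \<le> c3" unfolding c3_def using T c2p by (intro mult_right_mono) auto
  have c3p: "c3 \<ge> 0" using f3 c2p by linarith
  have f4: "14 * c3 \<le> c4" unfolding c4_def using T c3p by (intro mult_right_mono) auto
  have l: "T * (T^2 + 3) = c3 + 3 * T" unfolding c3_def c2_def by (simp add: power2_eq_square algebra_simps)
  have r: "(T^2 - 1)^2 = c4 - 2 * c2 + 1" unfolding c4_def c3_def c2_def by (simp add: power2_eq_square algebra_simps)
  have "9 * c3 + 27 * T < 4 * c4 - 8 * c2 + 4" using f2 f3 f4 T by linarith
  thus ?thesis unfolding l r by (simp add: field_simps)
qed

lemma R4:
  fixes a T S :: real
  assumes a0: "a \<ge> 0" and a3: "a^2 \<le> 3" and S: "S \<ge> 200" and up: "T^2 \<le> 4 + a^2 * S"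
  shows "a * (T^2 + 1) \<le> 30 * S powr (3/2)"
proof -
  have a2: "a \<le> 2"
  proof (rule ccontr)
    assume "\<not> a \<le> 2"
    hence "2^2 < a^2" by (intro power_strict_mono) auto
    thus False using a3 by simp
  qed
  have "a^2 * S \<le> 3 * S" using a3 S by (intro mult_right_mono) auto
  hence Tb: "T^2 + 1 \<le> 5 + 3 * S" using up by linarith
  have "a * (T^2 + 1) \<le> 2 * (5 + 3 * S)" using a2 a0 Tb by (intro mult_mono) auto
  hence "a * (T^2 + 1) \<le> 10 + 6 * S" by simp
  moreover have "S powr 1 \<le> S powr (3/2)" using S by (intro powr_mono) auto
  hence "S \<le> S powr (3/2)" using S by simp
  ultimately show ?thesis using S by linarith
qed



lemma half_eq: "(x::complex)/2 = y/2 \<Longrightarrow> y = x"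
  by (metis divide_cancel_right zero_neq_numeral)

lemma Od_one: "1 \<in> O_d d" using Od_of_int[of 1 d] by simp

lemma main_lemma:
  fixes d :: nat and D t0 u0 :: complex and t u :: "nat \<Rightarrow> complex"
  assumes d: "d \<in> class_one_d" and disc: "is_discriminant d D" and SD: "200 < cmod D"
    and fund: "fundamental_sol d D t0 u0"
    and seq: "\<forall>n. t n \<in> O_d d \<and> u n \<in> O_d d \<and> eps_tu D t0 u0 ^ (n + 1) = (t n + u n * sqrtD D) / 2"
  shows "(let m = (LEAST n. cmod (t n) < 4 / 9 * cmod (u n) ^ 2) in
           (\<exists>n. cmod (t n) < 4 / 9 * cmod (u n) ^ 2) \<and> m \<le> 2 \<and>
           (m \<noteq> 0 \<longrightarrow> cmod (u m) \<le> 30 * cmod D powr (3 / 2)))"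
proof -
  define s where "s = sqrtD D"
  have Dnz: "D \<noteq> 0" using SD by auto
  have s2: "s^2 = D" unfolding s_def using sqrtD_sq[OF Dnz] .
  have t0O: "t0 \<in> O_d d" and u0O: "u0 \<in> O_d d" and pell: "t0^2 - u0^2 * D = 4"
    and epsg: "cmod (eps_tu D t0 u0) > 1"
    using fund unfolding fundamental_sol_def pell_sol_def by auto
  define e where "e = (t0 + u0 * s)/2"
  have eps: "eps_tu D t0 u0 = e" unfolding e_def s_def eps_tu_def ..
  have seqn: "\<And>n. t n \<in> O_d d \<and> u n \<in> O_d d \<and> e^(n+1) = (t n + u n * s)/2"
    using seq eps s_def by auto
  have us: "u0^2 * s^2 = t0^2 - 4" using pell s2 by (simp add: algebra_simps)
  have u0D: "u0^2 * D = t0^2 - 4" using pell by (simp add: algebra_simps)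
  note U = uniq[OF d disc s2]
  have "(t 0 + u 0 * s)/2 = (t0 + u0 * s)/2" using seqn[of 0] unfolding e_def by simp
  hence "t0 + u0 * s = t 0 + u 0 * s" by (rule half_eq)
  hence t0e: "t 0 = t0" and u0e: "u 0 = u0" using U[OF t0O u0O] seqn[of 0] by auto
  have e2: "e^2 = ((t0^2 - 2) + (t0*u0)* s)/2"
  proof -
    have "(t0 + u0* s)^2 = t0^2 + 2*t0*u0* s + u0^2* s^2" by (simp add: power2_eq_square algebra_simps)
    also have "\<dots> = 2*((t0^2 - 2) + (t0*u0)* s)" unfolding us by (simp add: algebra_simps)
    finally have "(t0 + u0* s)^2 = 2*((t0^2 - 2) + (t0*u0)* s)" .
    thus ?thesis unfolding e_def by (simp add: power_divide)
  qed
  have O1: "t0^2 - 2 \<in> O_d d" by (intro Od_diff Od_power t0O Od_numeral)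
  have O2: "t0*u0 \<in> O_d d" by (intro Od_mult t0O u0O)
  have "e^(1+1) = (t 1 + u 1 * s)/2" using seqn[of 1] by blast
  hence "e^2 = (t 1 + u 1 * s)/2" by (metis one_add_one)
  hence "(t 1 + u 1 * s)/2 = ((t0^2 - 2) + (t0*u0)* s)/2" using e2 by simp
  hence "(t0^2 - 2) + (t0*u0)* s = t 1 + u 1 * s" by (rule half_eq)
  hence t1e: "t 1 = t0^2 - 2" and u1e: "u 1 = t0*u0" using U[OF O1 O2] seqn[of 1] by auto
  have e3: "e^3 = ((t0^3 - 3*t0) + (u0*(t0^2-1))* s)/2"
  proof -
    have "e^3 = e^2 * e" by (simp add: power2_eq_square power3_eq_cube)
    also have "\<dots> = (((t0^2 - 2) + (t0*u0)* s)/2) * e" unfolding e2 ..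
    also have "\<dots> = (((t0^2 - 2) + (t0*u0)* s) * (t0 + u0* s))/4" unfolding e_def by simp
    also have "((t0^2 - 2) + (t0*u0)* s) * (t0 + u0* s) = t0^3 - 2*t0 + t0*(u0^2* s^2) + (2*t0^2*u0 - 2*u0)* s"
      by (simp add: power2_eq_square power3_eq_cube algebra_simps)
    also have "\<dots> = 2*((t0^3 - 3*t0) + (u0*(t0^2-1))* s)" unfolding us
      by (simp add: power2_eq_square power3_eq_cube algebra_simps)
    also have "(2*((t0^3 - 3*t0) + (u0*(t0^2-1))* s))/4 = ((t0^3 - 3*t0) + (u0*(t0^2-1))* s)/2"
      by simp
    finally show ?thesis .
  qed
  have O3: "t0^3 - 3*t0 \<in> O_d d" by (intro Od_diff Od_power t0O Od_mult Od_numeral)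
  have O4: "u0*(t0^2-1) \<in> O_d d" by (intro Od_mult Od_diff Od_power t0O u0O Od_one)
  have "e^(2+1) = (t 2 + u 2 * s)/2" using seqn[of 2] by blast
  moreover have "(2::nat)+1 = 3" by simp
  ultimately have "e^3 = (t 2 + u 2 * s)/2" by metis
  hence "(t 2 + u 2 * s)/2 = ((t0^3 - 3*t0) + (u0*(t0^2-1))* s)/2" using e3 by simp
  hence "(t0^3 - 3*t0) + (u0*(t0^2-1))* s = t 2 + u 2 * s" by (rule half_eq)
  hence t2e: "t 2 = t0^3 - 3*t0" and u2e: "u 2 = u0*(t0^2-1)" using U[OF O3 O4] seqn[of 2] by auto
  define a where "a = cmod u0"
  define T where "T = cmod t0"
  define S where "S = cmod D"
  have S200: "S \<ge> 200" using SD unfolding S_def by simp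
  have T0: "T \<ge> 0" unfolding T_def by simp
  have a0: "a \<ge> 0" unfolding a_def by simp
  have u0nz: "u0 \<noteq> 0"
  proof
    assume "u0 = 0"
    hence "t0^2 = 4" using pell by simp
    hence "cmod (t0^2) = 4" by simp
    hence "T^2 = 2^2" unfolding T_def norm_power by simp
    hence T2: "T = 2" using T0 by (rule power2_eq_imp_eq) simp
    have "e = t0/2" using \<open>u0 = 0\<close> unfolding e_def by simp
    hence "cmod e = cmod (t0/2)" by (rule arg_cong)
    also have "\<dots> = T/2" unfolding T_def norm_divide by simp
    finally have "cmod e = 1" using T2 by simp
    thus False using epsg eps by simp
  qed
  have a1: "a \<ge> 1" unfolding a_def using Od_norm[OF d u0O u0nz] .
  have t0sq: "t0^2 = 4 + u0^2 * D" using pell by (simp add: algebra_simps)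
  have nT2: "cmod (t0^2) = T^2" unfolding T_def by (simp add: norm_power)
  have nuD: "cmod (u0^2 * D) = a^2 * S" unfolding a_def S_def by (simp add: norm_power norm_mult)
  have up: "T^2 \<le> 4 + a^2 * S"
  proof -
    have "cmod (t0^2) \<le> cmod (4::complex) + cmod (u0^2 * D)" unfolding t0sq by (rule norm_triangle_ineq)
    thus ?thesis unfolding nT2 nuD by simp
  qed
  have low: "a^2 * S \<le> T^2 + 4"
  proof -
    have "cmod (t0^2 - 4) \<le> cmod (t0^2) + cmod (4::complex)" by (rule norm_triangle_ineq4)
    thus ?thesis unfolding u0D[symmetric] nuD nT2 by simp
  qed
  have ct1: "cmod (t 1) \<le> T^2 + 2"
  proof -
    have "cmod (t0^2 - 2) \<le> cmod (t0^2) + cmod (2::complex)" by (rule norm_triangle_ineq4)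
    thus ?thesis unfolding t1e nT2 by simp
  qed
  have cu1: "cmod (u 1) = T * a" unfolding u1e T_def a_def by (simp add: norm_mult)
  have ct2: "cmod (t 2) \<le> T * (T^2 + 3)"
  proof -
    have "t 2 = t0 * (t0^2 - 3)" unfolding t2e by (simp add: power2_eq_square power3_eq_cube algebra_simps)
    hence "cmod (t 2) = T * cmod (t0^2 - 3)" unfolding T_def by (simp add: norm_mult)
    moreover have "cmod (t0^2 - 3) \<le> cmod (t0^2) + cmod (3::complex)" by (rule norm_triangle_ineq4)
    ultimately show ?thesis unfolding nT2 using T0 by (simp add: mult_left_mono)
  qed
  have cu2: "cmod (u 2) = a * cmod (t0^2 - 1)" unfolding u2e a_def by (simp add: norm_mult)
  have cu2up: "cmod (t0^2 - 1) \<le> T^2 + 1"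
  proof -
    have "cmod (t0^2 - 1) \<le> cmod (t0^2) + cmod (1::complex)" by (rule norm_triangle_ineq4)
    thus ?thesis unfolding nT2 by simp
  qed
  have cu2low: "T^2 - 1 \<le> cmod (t0^2 - 1)"
  proof -
    have "cmod (t0^2) - cmod (1::complex) \<le> cmod (t0^2 - 1)" by (rule norm_triangle_ineq2)
    thus ?thesis unfolding nT2 by simp
  qed
  define Pp where "Pp = (\<lambda>n. cmod (t n) < 4 / 9 * cmod (u n) ^ 2)"
  define m where "m = (LEAST n. Pp n)"
  have goal: "(\<exists>n. Pp n) \<and> m \<le> 2 \<and> (m \<noteq> 0 \<longrightarrow> cmod (u m) \<le> 30 * S powr (3 / 2))"
  proof (cases "Pp 0")
    case True
    hence "m = 0" unfolding m_def by (metis Least_le le_zero_eq)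
    thus ?thesis using True by auto
  next
    case nP0: False
    have h0: "T \<ge> 4/9 * a^2" using nP0 unfolding Pp_def t0e u0e T_def a_def by simp
    show ?thesis
    proof (cases "Pp 1")
      case True
      have "m \<le> 1" unfolding m_def using True by (rule Least_le)
      moreover have "Pp m" unfolding m_def using True by (rule LeastI)
      ultimately have "m = 1" using nP0 by (cases m) auto
      moreover have "cmod (u 1) \<le> 30 * S powr (3/2)" unfolding cu1 using R1[OF a1 S200 h0 up] .
      ultimately show ?thesis using True by auto
    next
      case nP1: False
      have "4/9 * (T*a)^2 \<le> cmod (t 1)" using nP1 unfolding Pp_def cu1 by simp
      hence h1: "4/9 * (T*a)^2 \<le> T^2 + 2" using ct1 by linarith
      have R: "a^2 \<le> 3 \<and> 14 \<le> T" using R2[OF a1 S200 T0 low h1] .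
      have T2: "T^2 - 1 \<ge> 0"
      proof -
        have "14 * 14 \<le> T * T" using R by (intro mult_mono) auto
        thus ?thesis by (simp add: power2_eq_square)
      qed
      have "T^2 - 1 \<le> cmod (u 2)"
      proof -
        have "1 * (T^2 - 1) \<le> a * cmod (t0^2 - 1)" using a1 cu2low T2 by (intro mult_mono) auto
        thus ?thesis unfolding cu2 by simp
      qed
      hence "(T^2 - 1)^2 \<le> cmod (u 2)^2" using T2 by (intro power_mono) auto
      moreover have "cmod (t 2) < 4/9 * (T^2 - 1)^2" using ct2 R3[of T] R by linarith
      ultimately have P2: "Pp 2" unfolding Pp_def by linarith
      have "m \<le> 2" unfolding m_def using P2 by (rule Least_le)
      moreover have "Pp m" unfolding m_def using P2 by (rule LeastI)
      ultimately have "m = 2" using nP0 nP1 by (cases m; cases "m - 1") auto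
      moreover have "cmod (u 2) \<le> 30 * S powr (3/2)"
      proof -
        have "cmod (u 2) \<le> a * (T^2 + 1)" unfolding cu2 using a0 cu2up by (intro mult_left_mono)
        also have "\<dots> \<le> 30 * S powr (3/2)" using R4[OF a0 _ S200 up] R by blast
        finally show ?thesis .
      qed
      ultimately show ?thesis using P2 by auto
    qed
  qed
  thus ?thesis unfolding Let_def m_def Pp_def S_def by simp
qed


theorem lemma4p6:
  fixes d :: nat
  assumes "d \<in> class_one_d"
  shows "\<exists>N::real. N > 0 \<and>
    (\<forall>D t0 u0 (t::nat \<Rightarrow> complex) (u::nat \<Rightarrow> complex).
       is_discriminant d D \<and> cmod D > N \<and> fundamental_sol d D t0 u0 \<and>
       (\<forall>n. t n \<in> O_d d \<and> u n \<in> O_d d \<and>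
            eps_tu D t0 u0 ^ (n + 1) = (t n + u n * sqrtD D) / 2)
     \<longrightarrow> (let m = (LEAST n. cmod (t n) < 4 / 9 * cmod (u n) ^ 2) in
           (\<exists>n. cmod (t n) < 4 / 9 * cmod (u n) ^ 2) \<and> m \<le> 2 \<and>
           (m \<noteq> 0 \<longrightarrow> cmod (u m) \<le> 30 * cmod D powr (3 / 2))))"
  proof -
  show ?thesis
    apply (rule exI[of _ "200::real"])
    apply (intro conjI allI impI)
    subgoal by simp
    subgoal for D t0 u0 t u using main_lemma[OF assms, of D t0 u0 t u] by blast
    done
qed

end
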